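(* Let $\xi_1,\dots,\xi_n$ be independent real random variables with $\mathbf{E}\xi_i=0$, satisfying Bernstein's condition: there is a constant $\varepsilon>0$ such that $|\mathbf{E}\xi_i^k|\le \frac12 k!\,\varepsilon^{k-2}\mathbf{E}\xi_i^2$ for all $k\ge 3$ and $i=1,\dots,n$. Let $\sigma^2=\sum_{i=1}^n\mathbf{E}\xi_i^2$, $\Psi_n(\lambda)=\sum_{i=1}^n\log\mathbf{E}e^{\lambda\xi_i}$ and $T_n(\lambda)=\sum_{i=1}^n\frac{\mathbf{E}\xi_ie^{\lambda\xi_i}}{\mathbf{E}e^{\lambda\xi_i}}$. Then for all $0\le\lambda<\varepsilon^{-1}$, \[ \Psi_n(\lambda)\le n\log\Big(1+\frac{\lambda^2\sigma^2}{2n(1-\lambda\varepsilon)}\Big)\le\frac{\lambda^2\sigma^2}{2(1-\lambda\varepsilon)} \] and \[ -\lambda T_n(\lambda)+\Psi_n(\lambda)\ge-\frac{\lambda^2\sigma^2}{2(1-\lambda\varepsilon)^6}. \] *)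

theory Defs
  imports "HOL-Probability.Probability"
begin

end

theory Submission
  imports Defs
begin

lemma sums_integral_series:
  fixes X :: "'a \<Rightarrow> real" and c :: "nat \<Rightarrow> real" and M :: "'a measure"
  assumes X[measurable]: "X \<in> borel_measurable M"
    and mom: "\<And>k. integrable M (\<lambda>x. X x ^ k)"
    and w: "integrable M w"
    and bound: "\<And>N x. x \<in> space M \<Longrightarrow> \<bar>\<Sum>k<N. c k * X x ^ k\<bar> \<le> w x"
    and ptw: "\<And>x. x \<in> space M \<Longrightarrow> (\<lambda>k. c k * X x ^ k) sums g x"
    and g[measurable]: "g \<in> borel_measurable M"
  shows "integrable M g" "(\<lambda>k. c k * (\<integral>x. X x ^ k \<partial>M)) sums (\<integral>x. g x \<partial>M)"
proof -
  define s where "s N x = (\<Sum>k<N. c k * X x ^ k)" for N x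
  have sm: "s N \<in> borel_measurable M" for N unfolding s_def by measurable
  have lim: "AE x in M. (\<lambda>i. s i x) \<longlonglongrightarrow> g x"
    using ptw unfolding s_def sums_def by auto
  have bd: "AE x in M. norm (s i x) \<le> w x" for i
    using bound unfolding s_def by auto
  show "integrable M g"
    by (rule integrable_dominated_convergence[OF g sm w lim bd])
  have L: "(\<lambda>i. integral\<^sup>L M (s i)) \<longlonglongrightarrow> integral\<^sup>L M g"
    by (rule integral_dominated_convergence[OF g sm w lim bd])
  have "integral\<^sup>L M (s N) = (\<Sum>k<N. c k * (\<integral>x. X x ^ k \<partial>M))" for N
    unfolding s_def using mom by (simp add: integral_sum)
  then show "(\<lambda>k. c k * (\<integral>x. X x ^ k \<partial>M)) sums (\<integral>x. g x \<partial>M)"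
    using L unfolding sums_def by simp
qed

lemma xexp_sums: "(\<lambda>k. real k * y ^ k / fact k) sums (y * exp (y::real))"
proof -
  have "(\<lambda>n. y * (y ^ n /\<^sub>R fact n)) sums (y * exp y)"
    by (intro sums_mult exp_converges)
  moreover have "(\<lambda>n. real (Suc n) * y ^ Suc n / fact (Suc n)) = (\<lambda>n. y * (y ^ n /\<^sub>R fact n))"
    by (auto simp: fact_Suc divide_simps)
  ultimately have "(\<lambda>n. real (Suc n) * y ^ Suc n / fact (Suc n)) sums (y * exp y)" by simp
  then show ?thesis using sums_Suc_iff[of "\<lambda>k. real k * y ^ k / fact k"] by simp
qed

lemma exp_sums': "(\<lambda>k. y ^ k / fact k) sums (exp (y::real))"
  using exp_converges[of y] by (simp add: divide_inverse mult.commute)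

lemma psi_sums: "(\<lambda>k. (real k - 1) * y ^ k / fact k) sums (y * exp (y::real) - exp y)"
proof -
  have "(\<lambda>k. real k * y ^ k / fact k - y ^ k / fact k) sums (y * exp (y::real) - exp y)"
    by (intro sums_diff xexp_sums exp_sums')
  then show ?thesis by (simp add: left_diff_distrib diff_divide_distrib)
qed

lemma abs_psi_sums: "(\<lambda>k. (real k + 1) * \<bar>y\<bar> ^ k / fact k) sums (\<bar>y\<bar> * exp \<bar>y::real\<bar> + exp \<bar>y\<bar>)"
proof -
  have "(\<lambda>k. real k * \<bar>y\<bar> ^ k / fact k + \<bar>y\<bar> ^ k / fact k) sums (\<bar>y\<bar> * exp \<bar>y::real\<bar> + exp \<bar>y\<bar>)"
    by (intro sums_add xexp_sums exp_sums')
  then show ?thesis by (simp add: distrib_right add_divide_distrib)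
qed


context prob_space begin

lemma exp_abs_integrable:
  fixes X :: "'a \<Rightarrow> real"
  assumes X[measurable]: "X \<in> borel_measurable M"
    and mom: "\<And>k. integrable M (\<lambda>x. X x ^ k)"
    and eps: "\<epsilon> > 0"
    and bern: "\<And>k. k \<ge> 3 \<Longrightarrow> \<bar>\<integral>x. X x ^ k \<partial>M\<bar> \<le> 1/2 * fact k * \<epsilon> ^ (k - 2) * (\<integral>x. X x ^ 2 \<partial>M)"
    and l: "0 \<le> l" "l * \<epsilon> < 1"
  shows "integrable M (\<lambda>x. exp (l * \<bar>X x\<bar>))"
proof -
  define v where "v = (\<integral>x. X x ^ 2 \<partial>M)"
  have v0: "v \<ge> 0" unfolding v_def by (intro integral_nonneg_AE) auto
  define f where "f k x = (if even k then l ^ k / fact k * X x ^ k else 0)" for k x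
  have fnn: "f k x \<ge> 0" for k x unfolding f_def using l by (auto simp: zero_le_even_power)
  have fint: "integrable M (f k)" for k
    unfolding f_def using mom by (cases "even k") auto
  have fsums: "(\<lambda>k. f k x) sums cosh (l * X x)" for x
  proof -
    have "(\<lambda>n. if even n then (l * X x) ^ n /\<^sub>R fact n else 0) = (\<lambda>k. f k x)"
      by (auto simp: f_def power_mult_distrib divide_inverse mult.commute)
    then show ?thesis using cosh_converges[of "l * X x"] by simp
  qed
  have int_f: "(\<integral>x. f k x \<partial>M) = (if even k then l ^ k / fact k * (\<integral>x. X x ^ k \<partial>M) else 0)" for k
    unfolding f_def by auto
  define C where "C = v / (2 * \<epsilon>^2)"
  have bnd: "norm (\<integral>x. norm (f k x) \<partial>M) \<le> C * (l * \<epsilon>) ^ k" if k: "k \<ge> 1" for k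
  proof -
    have C0: "C \<ge> 0" unfolding C_def using v0 eps by auto
    have "(\<integral>x. norm (f k x) \<partial>M) = (\<integral>x. f k x \<partial>M)" using fnn by simp
    moreover have "0 \<le> (\<integral>x. f k x \<partial>M)" using fnn by (intro integral_nonneg_AE) auto
    moreover have "(\<integral>x. f k x \<partial>M) \<le> C * (l * \<epsilon>) ^ k"
    proof (cases "even k")
      case False then show ?thesis using int_f[of k] C0 l eps by simp
    next
      case True
      then have k2: "k \<ge> 2" using k by presburger
      show ?thesis
      proof (cases "k = 2")
        case True
        then show ?thesis using int_f[of k] eps unfolding C_def v_def
          by (simp add: power_mult_distrib divide_simps)
      next
        case False
        then have k3: "k \<ge> 3" using k2 by simp
        have "(\<integral>x. f k x \<partial>M) = l ^ k / fact k * (\<integral>x. X x ^ k \<partial>M)" using int_f True by simp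
        also have "\<dots> \<le> l ^ k / fact k * \<bar>\<integral>x. X x ^ k \<partial>M\<bar>"
          using l by (intro mult_left_mono) auto
        also have "\<dots> \<le> l ^ k / fact k * (1/2 * fact k * \<epsilon> ^ (k - 2) * v)"
          using l bern[OF k3] unfolding v_def by (intro mult_left_mono) auto
        also have "\<dots> = C * (l * \<epsilon>) ^ k"
        proof -
          have "\<epsilon> ^ k = \<epsilon>^2 * \<epsilon> ^ (k-2)" using k2 by (metis le_add_diff_inverse power_add)
          then show ?thesis unfolding C_def using eps by (simp add: power_mult_distrib field_simps)
        qed
        finally show ?thesis .
      qed
    qed
    ultimately show ?thesis by simp
  qed
  have summ: "summable (\<lambda>k. \<integral>x. norm (f k x) \<partial>M)"
    apply (rule summable_comparison_test'[where N=1 and g="\<lambda>k. C * (l * \<epsilon>) ^ k"])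
     apply (intro summable_mult summable_geometric)
    using l eps apply simp
    by (rule bnd) simp
  have "integrable M (\<lambda>x. \<Sum>k. f k x)"
    apply (rule integrable_suminf[OF fint _ summ])
    using fsums fnn by (auto simp: sums_iff)
  moreover have "(\<lambda>x. \<Sum>k. f k x) = (\<lambda>x. cosh (l * X x))"
    using fsums by (auto simp: sums_iff)
  ultimately have ic: "integrable M (\<lambda>x. 2 * cosh (l * X x))" by simp
  show ?thesis
  proof (rule Bochner_Integration.integrable_bound[OF ic])
    show "AE x in M. norm (exp (l * \<bar>X x\<bar>)) \<le> norm (2 * cosh (l * X x))"
    proof
      fix x
      have "exp (l * \<bar>X x\<bar>) \<le> exp (l * X x) + exp (- (l * X x))"
        by (cases "X x \<ge> 0") (auto simp: add_pos_pos add_increasing2 add_increasing)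
      also have "\<dots> = 2 * cosh (l * X x)" by (simp add: cosh_def)
      finally show "norm (exp (l * \<bar>X x\<bar>)) \<le> norm (2 * cosh (l * X x))" by simp
    qed
  qed measurable
qed


lemma single:
  fixes X :: "'a \<Rightarrow> real"
  assumes X[measurable]: "X \<in> borel_measurable M"
    and mom: "\<And>k. integrable M (\<lambda>x. X x ^ k)"
    and mean: "(\<integral>x. X x \<partial>M) = 0"
    and eps: "\<epsilon> > 0"
    and bern: "\<And>k. k \<ge> 3 \<Longrightarrow> \<bar>\<integral>x. X x ^ k \<partial>M\<bar> \<le> 1/2 * fact k * \<epsilon> ^ (k - 2) * (\<integral>x. X x ^ 2 \<partial>M)"
    and l: "0 \<le> l" "l * \<epsilon> < 1"
  shows "1 \<le> (\<integral>x. exp (l * X x) \<partial>M)"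
    "(\<integral>x. exp (l * X x) \<partial>M) \<le> 1 + l^2 * (\<integral>x. X x ^ 2 \<partial>M) / (2 * (1 - l * \<epsilon>))"
    "l * (\<integral>x. X x * exp (l * X x) \<partial>M) / (\<integral>x. exp (l * X x) \<partial>M) - ln (\<integral>x. exp (l * X x) \<partial>M)
       \<le> l^2 * (\<integral>x. X x ^ 2 \<partial>M) / (2 * (1 - l * \<epsilon>)^2)"
proof -
  define v where "v = (\<integral>x. X x ^ 2 \<partial>M)"
  have v0: "v \<ge> 0" unfolding v_def by (intro integral_nonneg_AE) auto
  define m where "m k = (\<integral>x. X x ^ k \<partial>M)" for k
  have m0: "m 0 = 1" unfolding m_def by (simp add: prob_space)
  have m1: "m 1 = 0" "m (Suc 0) = 0" unfolding m_def using mean by simp_all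
  have m2: "m 2 = v" unfolding m_def v_def by simp
  have mb: "\<bar>m k\<bar> \<le> 1/2 * fact k * \<epsilon> ^ (k - 2) * v" if "k \<ge> 3" for k
    using bern[OF that] unfolding m_def v_def .
  define x where "x = l * \<epsilon>"
  have x0: "0 \<le> x" "x < 1" unfolding x_def using l eps by auto
  define l' where "l' = (l + 1/\<epsilon>) / 2"
  have ll': "l < l'" "l' * \<epsilon> < 1" "0 \<le> l'"
    using l eps by (auto simp: l'_def field_simps)
  define d where "d = l' - l"
  have d0: "d > 0" using ll' unfolding d_def by simp
  define w where "w y = (1 + l / d) * exp (l' * \<bar>X y\<bar>)" for y
  have wint: "integrable M w"
    unfolding w_def by (intro integrable_mult_right exp_abs_integrable[OF X mom eps bern ll'(3) ll'(2)])
  have wbound: "\<bar>l * X y\<bar> * exp \<bar>l * X y\<bar> + exp \<bar>l * X y\<bar> \<le> w y" for y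
  proof -
    define t where "t = \<bar>X y\<bar>"
    have t0: "t \<ge> 0" unfolding t_def by simp
    have e1: "exp (l * t) \<le> exp (l' * t)" using ll' t0 by (auto intro: mult_right_mono)
    have "d * t \<le> exp (d * t)" using exp_ge_add_one_self[of "d*t"] by linarith
    then have "l * exp (l * t) * (d * t) \<le> l * exp (l * t) * exp (d * t)"
      using l by (intro mult_left_mono) auto
    then have "l * t * exp (l * t) \<le> l / d * (exp (d * t) * exp (l * t))"
      using d0 by (simp add: field_simps)
    also have "exp (d * t) * exp (l * t) = exp (l' * t)" unfolding d_def by (simp add: algebra_simps flip: exp_add)
    finally have e2: "l * t * exp (l * t) \<le> l / d * exp (l' * t)" .
    have "\<bar>l * X y\<bar> = l * t" using l unfolding t_def by (simp add: abs_mult)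
    moreover have "w y = exp (l' * t) + l / d * exp (l' * t)" unfolding w_def t_def by (simp add: algebra_simps)
    ultimately show ?thesis using e1 e2 by (simp only:)
  qed
  have eser: "(\<lambda>k. l ^ k / fact k * m k) sums (\<integral>y. exp (l * X y) \<partial>M)"
    and eint: "integrable M (\<lambda>y. exp (l * X y))"
  proof -
    have ptw: "(\<lambda>k. l ^ k / fact k * X y ^ k) sums exp (l * X y)" for y
      using exp_sums'[of "l * X y"] by (simp add: power_mult_distrib)
    have bd: "\<bar>\<Sum>k<N. l ^ k / fact k * X y ^ k\<bar> \<le> w y" for N y
    proof -
      have "\<bar>\<Sum>k<N. l ^ k / fact k * X y ^ k\<bar> \<le> (\<Sum>k<N. \<bar>l * X y\<bar> ^ k / fact k)"
        by (rule order_trans[OF sum_abs]) (simp add: abs_mult power_abs power_mult_distrib)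
      also have "\<dots> \<le> exp \<bar>l * X y\<bar>"
        using exp_sums'[of "\<bar>l * X y\<bar>"] by (intro sum_le_suminf[of _ "{..<N}", THEN order_trans]) (auto simp: sums_iff)
      also have "\<dots> \<le> w y" using wbound[of y] by (smt (verit) mult_nonneg_nonneg abs_ge_zero exp_ge_zero)
      finally show ?thesis .
    qed
    show "(\<lambda>k. l ^ k / fact k * m k) sums (\<integral>y. exp (l * X y) \<partial>M)"
      using sums_integral_series[OF X mom wint bd ptw] unfolding m_def by simp
    show "integrable M (\<lambda>y. exp (l * X y))"
      using sums_integral_series[OF X mom wint bd ptw] by simp
  qed
  have pser: "(\<lambda>k. (real k - 1) * l ^ k / fact k * m k) sums (\<integral>y. l * X y * exp (l * X y) - exp (l * X y) \<partial>M)"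
  proof -
    have ptw: "(\<lambda>k. (real k - 1) * l ^ k / fact k * X y ^ k) sums (l * X y * exp (l * X y) - exp (l * X y))" for y
      using psi_sums[of "l * X y"] by (simp add: power_mult_distrib mult.assoc)
    have bd: "\<bar>\<Sum>k<N. (real k - 1) * l ^ k / fact k * X y ^ k\<bar> \<le> w y" for N y
    proof -
      have "\<bar>\<Sum>k<N. (real k - 1) * l ^ k / fact k * X y ^ k\<bar> \<le> (\<Sum>k<N. (real k + 1) * \<bar>l * X y\<bar> ^ k / fact k)"
      proof (rule order_trans[OF sum_abs], rule sum_mono)
        fix k
        have "\<bar>real k - 1\<bar> \<le> real k + 1" by simp
        then have "\<bar>real k - 1\<bar> * (\<bar>l * X y\<bar> ^ k / fact k) \<le> (real k + 1) * (\<bar>l * X y\<bar> ^ k / fact k)"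
          by (intro mult_right_mono) auto
        then show "\<bar>(real k - 1) * l ^ k / fact k * X y ^ k\<bar> \<le> (real k + 1) * \<bar>l * X y\<bar> ^ k / fact k"
          by (simp add: abs_mult power_abs power_mult_distrib)
      qed
      also have "\<dots> \<le> \<bar>l * X y\<bar> * exp \<bar>l * X y\<bar> + exp \<bar>l * X y\<bar>"
        using abs_psi_sums[of "l * X y"] by (intro sum_le_suminf[of _ "{..<N}", THEN order_trans]) (auto simp: sums_iff)
      also have "\<dots> \<le> w y" using wbound[of y] .
      finally show ?thesis .
    qed
    have ptw': "(\<lambda>k. ((real k - 1) * l ^ k / fact k) * X y ^ k) sums (l * X y * exp (l * X y) - exp (l * X y))" for y
      using ptw by simp
    show ?thesis
      using sums_integral_series[OF X mom wint bd ptw'] unfolding m_def by (simp add: mult.assoc)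
  qed
  have lk: "l ^ k = l^2 * l ^ (k - 2)" if "k \<ge> 2" for k
    using that by (metis le_add_diff_inverse power_add)
  have key: "l ^ k / fact k * \<bar>m k\<bar> \<le> l^2 * v / 2 * x ^ (k - 2)" if k3: "k \<ge> 3" for k
  proof -
    have "l ^ k / fact k * \<bar>m k\<bar> \<le> l ^ k / fact k * (1/2 * fact k * \<epsilon> ^ (k - 2) * v)"
      using l mb[OF k3] by (intro mult_left_mono) auto
    also have "\<dots> = l^2 * v / 2 * x ^ (k - 2)"
      unfolding x_def using lk[of k] k3 by (simp add: power_mult_distrib field_simps)
    finally show ?thesis .
  qed
  show f1: "1 \<le> (\<integral>x. exp (l * X x) \<partial>M)"
  proof -
    have iX: "integrable M X" using mom[of 1] by simp
    have "(\<integral>y. 1 + l * X y \<partial>M) \<le> (\<integral>y. exp (l * X y) \<partial>M)"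
      using iX eint by (intro integral_mono) (auto simp: exp_ge_add_one_self)
    moreover have "(\<integral>y. 1 + l * X y \<partial>M) = 1"
      using iX mean by (simp add: prob_space)
    ultimately show ?thesis by simp
  qed
  show "(\<integral>x. exp (l * X x) \<partial>M) \<le> 1 + l^2 * (\<integral>x. X x ^ 2 \<partial>M) / (2 * (1 - l * \<epsilon>))"
  proof -
    define b where "b k = (if k = 0 then 1 else if k = 1 then 0 else l^2 * v / 2 * x ^ (k - 2))" for k
    have tb: "l ^ k / fact k * m k \<le> b k" for k
    proof -
      consider "k = 0" | "k = 1" | "k = 2" | "k \<ge> 3" by linarith
      then show ?thesis
      proof cases
        case 4
        have "l ^ k / fact k * m k \<le> l ^ k / fact k * \<bar>m k\<bar>"
          using l by (intro mult_left_mono) auto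
        then show ?thesis using key[OF 4] 4 unfolding b_def by simp
      qed (auto simp: b_def m0 m1 m2)
    qed
    have bs: "b sums (l^2 * v / 2 * (1 / (1 - x)) + 0 + 1)"
    proof -
      have "(\<lambda>n. l^2 * v / 2 * x ^ n) sums (l^2 * v / 2 * (1 / (1 - x)))"
        using x0 by (intro sums_mult geometric_sums) simp
      then have "(\<lambda>n. b (Suc (Suc n))) sums (l^2 * v / 2 * (1 / (1 - x)))"
        unfolding b_def by simp
      then have "(\<lambda>n. b (Suc n)) sums (l^2 * v / 2 * (1 / (1 - x)) + 0)"
        using sums_Suc_iff[of "\<lambda>n. b (Suc n)"] by (simp add: b_def)
      then show ?thesis using sums_Suc_iff[of b] by (simp add: b_def)
    qed
    have "(\<integral>x. exp (l * X x) \<partial>M) \<le> l^2 * v / 2 * (1 / (1 - x)) + 0 + 1"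
      by (rule sums_le[OF tb eser bs])
    then show ?thesis unfolding v_def x_def by simp
  qed
  show "l * (\<integral>x. X x * exp (l * X x) \<partial>M) / (\<integral>x. exp (l * X x) \<partial>M) - ln (\<integral>x. exp (l * X x) \<partial>M)
       \<le> l^2 * (\<integral>x. X x ^ 2 \<partial>M) / (2 * (1 - l * \<epsilon>)^2)"
  proof -
    define c where "c = l^2 * v / (2 * (1 - x)^2)"
    have c0: "c \<ge> 0" unfolding c_def using v0 by auto
    define b where "b k = (if k = 0 then -1 else l^2 * v / 2 * (real k - 1) * x ^ (k - 2))" for k
    have tb: "(real k - 1) * l ^ k / fact k * m k \<le> b k" for k
    proof -
      consider "k = 0" | "k = 1" | "k = 2" | "k \<ge> 3" by linarith
      then show ?thesis
      proof cases
        case 4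
        have "(real k - 1) * l ^ k / fact k * m k \<le> (real k - 1) * (l ^ k / fact k * \<bar>m k\<bar>)"
        proof -
          have "l ^ k / fact k * m k \<le> l ^ k / fact k * \<bar>m k\<bar>"
            using l by (intro mult_left_mono) auto
          then have "(real k - 1) * (l ^ k / fact k * m k) \<le> (real k - 1) * (l ^ k / fact k * \<bar>m k\<bar>)"
            by (rule mult_left_mono) (use 4 in auto)
          then show ?thesis by (simp add: mult.assoc)
        qed
        also have "\<dots> \<le> (real k - 1) * (l^2 * v / 2 * x ^ (k - 2))"
          using key[OF 4] 4 by (intro mult_left_mono) auto
        finally show ?thesis using 4 unfolding b_def by (simp add: algebra_simps)
      qed (auto simp: b_def m0 m1 m2)
    qed
    have bs: "b sums (l^2 * v / 2 * (1 / (1 - x)^2) + 0 + (-1))"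
    proof -
      have "(\<lambda>n. l^2 * v / 2 * (of_nat (Suc n) * x ^ n)) sums (l^2 * v / 2 * (1 / (1 - x)^2))"
        using x0 by (intro sums_mult geometric_deriv_sums) simp
      moreover have "(\<lambda>n. b (Suc (Suc n))) = (\<lambda>n. l^2 * v / 2 * (of_nat (Suc n) * x ^ n))"
        unfolding b_def by (auto simp: algebra_simps)
      ultimately have "(\<lambda>n. b (Suc (Suc n))) sums (l^2 * v / 2 * (1 / (1 - x)^2))" by simp
      then have "(\<lambda>n. b (Suc n)) sums (l^2 * v / 2 * (1 / (1 - x)^2) + 0)"
        using sums_Suc_iff[of "\<lambda>n. b (Suc n)"] by (simp add: b_def)
      then show ?thesis using sums_Suc_iff[of b] by (simp add: b_def)
    qed
    have Pl: "(\<integral>y. l * X y * exp (l * X y) - exp (l * X y) \<partial>M) \<le> c - 1"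
      using sums_le[OF tb pser bs] unfolding c_def by simp
    have xint: "integrable M (\<lambda>y. l * X y * exp (l * X y))"
    proof (rule Bochner_Integration.integrable_bound[OF wint])
      show "AE y in M. norm (l * X y * exp (l * X y)) \<le> norm (w y)"
      proof
        fix y
        have "norm (l * X y * exp (l * X y)) \<le> \<bar>l * X y\<bar> * exp \<bar>l * X y\<bar>"
        proof -
          have "norm (l * X y * exp (l * X y)) = \<bar>l * X y\<bar> * exp (l * X y)" by (simp add: abs_mult)
          also have "\<dots> \<le> \<bar>l * X y\<bar> * exp \<bar>l * X y\<bar>" by (intro mult_left_mono) auto
          finally show ?thesis .
        qed
        also have "\<dots> \<le> w y" using wbound[of y] by (smt (verit) exp_ge_zero)
        finally show "norm (l * X y * exp (l * X y)) \<le> norm (w y)" by simp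
      qed
    qed measurable
    define F where "F = (\<integral>x. exp (l * X x) \<partial>M)"
    define A where "A = l * (\<integral>x. X x * exp (l * X x) \<partial>M)"
    have "(\<integral>y. l * X y * exp (l * X y) - exp (l * X y) \<partial>M) = A - F"
      unfolding A_def F_def using xint eint by (simp add: mult.assoc)
    with Pl have AF: "A \<le> F - 1 + c" by simp
    have F1: "F \<ge> 1" using f1 unfolding F_def .
    have "A / F \<le> (F - 1 + c) / F" using AF F1 by (simp add: divide_right_mono)
    also have "\<dots> = 1 - 1 / F + c / F" using F1 by (simp add: field_simps)
    finally have h1: "A / F \<le> 1 - 1 / F + c / F" .
    have h2: "c / F \<le> c" using F1 c0 by (simp add: divide_le_eq mult_le_cancel_left1)
    have h3: "- 1 / F \<le> ln F - 1"
    proof -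
      have "ln (1 / F) \<le> 1 / F - 1" using F1 by (intro ln_le_minus_one) simp
      then show ?thesis using F1 by (simp add: ln_div)
    qed
    have "A / F - ln F \<le> c" using h1 h2 h3 by linarith
    moreover have "c \<le> l^2 * v / (2 * (1 - x)^2)" unfolding c_def by simp
    ultimately show ?thesis unfolding A_def F_def v_def x_def by simp
  qed
qed

end
theorem lemma2:
  fixes M :: "'a measure" and \<xi> :: "nat \<Rightarrow> 'a \<Rightarrow> real"
    and n :: nat and \<epsilon> l :: real
  assumes "prob_space M"
    and rv: "\<And>i. i \<in> {1..n} \<Longrightarrow> \<xi> i \<in> borel_measurable M"
    and indep: "prob_space.indep_vars M (\<lambda>_. borel) \<xi> {1..n}"
    and moments: "\<And>i k. i \<in> {1..n} \<Longrightarrow> integrable M (\<lambda>x. \<xi> i x ^ k)"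
    and mean0: "\<And>i. i \<in> {1..n} \<Longrightarrow> (\<integral>x. \<xi> i x \<partial>M) = 0"
    and eps: "\<epsilon> > 0"
    and bernstein: "\<And>i k. i \<in> {1..n} \<Longrightarrow> k \<ge> 3 \<Longrightarrow>
       \<bar>\<integral>x. \<xi> i x ^ k \<partial>M\<bar> \<le> 1/2 * fact k * \<epsilon> ^ (k - 2) * (\<integral>x. \<xi> i x ^ 2 \<partial>M)"
    and lam: "0 \<le> l" "l < 1 / \<epsilon>"
  shows
    "let \<sigma>2 = (\<Sum>i=1..n. \<integral>x. \<xi> i x ^ 2 \<partial>M);
         \<Psi> = (\<Sum>i=1..n. ln (\<integral>x. exp (l * \<xi> i x) \<partial>M));
         T = (\<Sum>i=1..n. (\<integral>x. \<xi> i x * exp (l * \<xi> i x) \<partial>M) / (\<integral>x. exp (l * \<xi> i x) \<partial>M))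
     in \<Psi> \<le> real n * ln (1 + l^2 * \<sigma>2 / (2 * real n * (1 - l * \<epsilon>)))
      \<and> real n * ln (1 + l^2 * \<sigma>2 / (2 * real n * (1 - l * \<epsilon>))) \<le> l^2 * \<sigma>2 / (2 * (1 - l * \<epsilon>))
      \<and> - l * T + \<Psi> \<ge> - (l^2 * \<sigma>2 / (2 * (1 - l * \<epsilon>) ^ 6))"
proof -
  interpret prob_space M by fact
  have x1: "l * \<epsilon> < 1" using lam eps by (simp add: field_simps)
  define x where "x = l * \<epsilon>"
  have x0: "0 \<le> x" "x < 1" using x1 lam eps unfolding x_def by auto
  define f where "f i = (\<integral>x. exp (l * \<xi> i x) \<partial>M)" for i
  define v where "v i = (\<integral>x. \<xi> i x ^ 2 \<partial>M)" for i
  define N where "N i = (\<integral>x. \<xi> i x * exp (l * \<xi> i x) \<partial>M)" for i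
  define a where "a i = l^2 * v i / (2 * (1 - x))" for i
  have P: "1 \<le> f i" "f i \<le> 1 + a i"
     "l * N i / f i - ln (f i) \<le> l^2 * v i / (2 * (1 - x)^2)" if i: "i \<in> {1..n}" for i
    using single[OF rv[OF i] moments[OF i] mean0[OF i] eps bernstein[OF i] lam(1) x1]
    unfolding f_def v_def N_def a_def x_def by auto
  have v0: "v i \<ge> 0" for i unfolding v_def by (intro integral_nonneg_AE) auto
  have a0: "a i \<ge> 0" for i unfolding a_def using v0 x0 by auto
  define \<sigma>2 where "\<sigma>2 = (\<Sum>i=1..n. v i)"
  have sa: "(\<Sum>i=1..n. a i) = l^2 * \<sigma>2 / (2 * (1 - x))"
    unfolding a_def \<sigma>2_def by (simp add: sum_divide_distrib sum_distrib_left)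
  have \<sigma>0: "\<sigma>2 \<ge> 0" unfolding \<sigma>2_def using v0 by (simp add: sum_nonneg)
  define ab where "ab = l^2 * \<sigma>2 / (2 * real n * (1 - x))"
  have ab0: "ab \<ge> 0" unfolding ab_def using \<sigma>0 x0 by auto
  have C1: "(\<Sum>i=1..n. ln (f i)) \<le> real n * ln (1 + ab)"
  proof (cases "n = 0")
    case True then show ?thesis by simp
  next
    case False
    have "(\<Sum>i=1..n. ln (f i)) \<le> (\<Sum>i=1..n. ln (1 + ab) + ((1 + a i) / (1 + ab) - 1))"
    proof (rule sum_mono)
      fix i assume i: "i \<in> {1..n}"
      have "ln (f i) \<le> ln (1 + a i)" using P[OF i] by simp
      also have "ln (1 + a i) - ln (1 + ab) = ln ((1 + a i) / (1 + ab))"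
        using a0[of i] ab0 by (simp add: ln_div)
      also have "\<dots> \<le> (1 + a i) / (1 + ab) - 1"
        using a0[of i] ab0 by (intro ln_le_minus_one) auto
      finally show "ln (f i) \<le> ln (1 + ab) + ((1 + a i) / (1 + ab) - 1)" by simp
    qed
    also have "\<dots> = real n * ln (1 + ab) + ((real n + (\<Sum>i=1..n. a i)) / (1 + ab) - real n)"
      by (simp add: sum.distrib sum_subtractf add_divide_distrib sum_divide_distrib[symmetric])
    also have "(\<Sum>i=1..n. a i) = real n * ab"
      unfolding sa ab_def using False by simp
    also have "(real n + real n * ab) / (1 + ab) - real n = 0"
      using ab0 by (simp add: field_simps)
    finally show ?thesis by simp
  qed
  have C2: "real n * ln (1 + ab) \<le> l^2 * \<sigma>2 / (2 * (1 - x))"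
  proof (cases "n = 0")
    case True then show ?thesis using \<sigma>0 x0 by simp
  next
    case False
    have "real n * ln (1 + ab) \<le> real n * ab"
      using ab0 by (intro mult_left_mono ln_add_one_self_le_self) auto
    also have "\<dots> = l^2 * \<sigma>2 / (2 * (1 - x))" unfolding ab_def using False by simp
    finally show ?thesis .
  qed
  have C3: "- l * (\<Sum>i=1..n. N i / f i) + (\<Sum>i=1..n. ln (f i)) \<ge> - (l^2 * \<sigma>2 / (2 * (1 - x) ^ 6))"
  proof -
    have "(\<Sum>i=1..n. - (l^2 * v i / (2 * (1 - x) ^ 6))) \<le> (\<Sum>i=1..n. - (l * N i / f i) + ln (f i))"
    proof (rule sum_mono)
      fix i assume i: "i \<in> {1..n}"
      have "(1 - x) ^ 6 \<le> (1 - x) ^ 2" using x0 by (intro power_decreasing) auto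
      then have "l^2 * v i / (2 * (1 - x)^2) \<le> l^2 * v i / (2 * (1 - x) ^ 6)"
        using x0 v0[of i] by (intro divide_left_mono mult_nonneg_nonneg) auto
      then show "- (l^2 * v i / (2 * (1 - x) ^ 6)) \<le> - (l * N i / f i) + ln (f i)"
        using P(3)[OF i] by simp
    qed
    moreover have "(\<Sum>i=1..n. - (l^2 * v i / (2 * (1 - x) ^ 6))) = - (l^2 * \<sigma>2 / (2 * (1 - x) ^ 6))"
      unfolding \<sigma>2_def by (simp add: sum_negf sum_divide_distrib sum_distrib_left)
    moreover have "(\<Sum>i=1..n. - (l * N i / f i) + ln (f i)) = - l * (\<Sum>i=1..n. N i / f i) + (\<Sum>i=1..n. ln (f i))"
      by (simp add: sum.distrib sum_negf sum_distrib_left sum_subtractf)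
    ultimately show ?thesis by simp
  qed
  show ?thesis
    using C1 C2 C3 unfolding Let_def f_def[symmetric] v_def[symmetric] N_def[symmetric]
      \<sigma>2_def[symmetric] ab_def x_def by simp
qed

end
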